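(* Let $k,a,b$ be integers with $k<a<b$. Let $G$ be a bipartite graph with classes $A=\{v_1,v_2,\dots,v_a\}$ and $B$, where $|B|=b$ and every vertex of $A$ has degree at least $b-k$ in $G$. Then for any non-negative integers $c_1,\dots,c_a$ with $\sum_{i=1}^a c_i \le b-k$, $G$ contains a star forest (a subgraph consisting of vertex-disjoint stars) in which, for every $i$, the vertex $v_i$ is the center of a star with exactly $c_i$ leaves (all leaves lying in $B$). *)

theory Defs
  imports Main
begin

definition bipartite_graph :: "('v \<Rightarrow> 'v \<Rightarrow> bool) \<Rightarrow> 'v set \<Rightarrow> 'v set \<Rightarrow> bool" where
  "bipartite_graph E A B \<longleftrightarrow> A \<inter> B = {} \<and> (\<forall>x y. E x y \<longleftrightarrow> E y x)
     \<and> (\<forall>x y. E x y \<longrightarrow> (x \<in> A \<and> y \<in> B) \<or> (x \<in> B \<and> y \<in> A))"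

definition degree :: "('v \<Rightarrow> 'v \<Rightarrow> bool) \<Rightarrow> 'v \<Rightarrow> nat" where
  "degree E x = card {y. E x y}"

end

theory Submission
  imports Defs
begin

theorem claim9:
  fixes k :: int and a b :: nat and E :: "'v \<Rightarrow> 'v \<Rightarrow> bool"
    and v :: "nat \<Rightarrow> 'v" and A B :: "'v set" and c :: "nat \<Rightarrow> nat"
  assumes "k < int a" and "a < b"
    and "bipartite_graph E A B"
    and "inj_on v {1..a}" and "A = v ` {1..a}"
    and "finite B" and "card B = b"
    and "\<forall>i\<in>{1..a}. int (degree E (v i)) \<ge> int b - k"
    and "int (\<Sum>i=1..a. c i) \<le> int b - k"
  shows "\<exists>L :: nat \<Rightarrow> 'v set.
           (\<forall>i\<in>{1..a}. L i \<subseteq> B \<and> card (L i) = c i \<and> (\<forall>y\<in>L i. E (v i) y))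
         \<and> (\<forall>i\<in>{1..a}. \<forall>j\<in>{1..a}. i \<noteq> j \<longrightarrow> L i \<inter> L j = {})"
proof -
  have main: "n \<le> a \<Longrightarrow> \<exists>L :: nat \<Rightarrow> 'v set.
           (\<forall>i\<in>{1..n}. L i \<subseteq> B \<and> card (L i) = c i \<and> (\<forall>y\<in>L i. E (v i) y))
         \<and> (\<forall>i\<in>{1..n}. \<forall>j\<in>{1..n}. i \<noteq> j \<longrightarrow> L i \<inter> L j = {})" for n
  proof (induction n)
    case 0
    then show ?case by auto
  next
    case (Suc n)
    then obtain L where L1: "\<forall>i\<in>{1..n}. L i \<subseteq> B \<and> card (L i) = c i \<and> (\<forall>y\<in>L i. E (v i) y)"
      and L2: "\<forall>i\<in>{1..n}. \<forall>j\<in>{1..n}. i \<noteq> j \<longrightarrow> L i \<inter> L j = {}" by auto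
    define U where "U = (\<Union>i\<in>{1..n}. L i)"
    define N where "N = {y. E (v (Suc n)) y}"
    have vA: "v (Suc n) \<in> A" using Suc.prems assms(5) by auto
    have NB: "N \<subseteq> B" using vA assms(3) unfolding bipartite_graph_def N_def by blast
    have fN: "finite N" using NB assms(6) finite_subset by blast
    have UB: "U \<subseteq> B" using L1 U_def by blast
    have fU: "finite U" using UB assms(6) finite_subset by blast
    have cU: "card U \<le> (\<Sum>i=1..n. c i)"
      unfolding U_def using card_UN_le[of "{1..n}" L] L1 by simp
    have dN: "int (card N) \<ge> int b - k"
      using assms(8) Suc.prems unfolding degree_def N_def by auto
    have sle: "(\<Sum>i=1..Suc n. c i) \<le> (\<Sum>i=1..a. c i)"
      using Suc.prems by (intro sum_mono2) auto
    have ssuc: "(\<Sum>i=1..Suc n. c i) = (\<Sum>i=1..n. c i) + c (Suc n)" by simp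
    have "card N \<le> card (N - U) + card U"
      by (metis card_Diff_subset_Int card_mono diff_le_mono2 fN fU Int_lower1 Int_lower2 le_diff_conv finite_Int card_Int_Diff le_add1 add.commute)
    hence cd: "c (Suc n) \<le> card (N - U)"
      using cU dN sle ssuc assms(9) by linarith
    obtain S where S: "S \<subseteq> N - U" "card S = c (Suc n)"
      using obtain_subset_with_card_n[OF cd] by blast
    define L' where "L' = L(Suc n := S)"
    show ?case
    proof (rule exI[of _ L'], rule conjI; (intro ballI impI)?)
      fix i assume i: "i \<in> {1..Suc n}"
      show "L' i \<subseteq> B \<and> card (L' i) = c i \<and> (\<forall>y\<in>L' i. E (v i) y)"
      proof (cases "i = Suc n")
        case True
        then show ?thesis using S NB unfolding L'_def N_def by auto
      next
        case False
        then show ?thesis using L1 i unfolding L'_def by auto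
      qed
    next
      fix i j assume i: "i \<in> {1..Suc n}" and j: "j \<in> {1..Suc n}" and ij: "i \<noteq> j"
      show "L' i \<inter> L' j = {}"
      proof (cases "i = Suc n")
        case True
        then have "j \<in> {1..n}" using j ij by auto
        then show ?thesis using True S ij unfolding L'_def U_def by auto
      next
        case False
        then have i': "i \<in> {1..n}" using i by auto
        show ?thesis
        proof (cases "j = Suc n")
          case True
          then show ?thesis using i' S ij unfolding L'_def U_def by auto
        next
          case False
          then show ?thesis using i' j ij L2 `i \<noteq> Suc n` unfolding L'_def by auto
        qed
      qed
    qed
  qed
  show ?thesis using main[of a] by simp
qed

end
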